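(* Let $G$ be a connected simple graph on $n\ge2$ vertices $v_1,\dots,v_n$, let $\alpha$ be a real number, and suppose the vertices are labeled so that $({}^\alpha m)_1\ge({}^\alpha m)_2\ge\cdots\ge({}^\alpha m)_n$. Let $N=\max_{i\sim j} d_j^\alpha/d_i^\alpha$. Then for $1\le i\le n$, \[\rho(A(G))\le \frac{({}^\alpha m)_i-N+\sqrt{(({}^\alpha m)_i+N)^2+4N\sum_{k=1}^{i-1}\big(({}^\alpha m)_k-({}^\alpha m)_i\big)}}{2}.\] Equality holds if and only if $({}^\alpha m)_1=\cdots=({}^\alpha m)_n$, or there is $t$ with $2\le t\le i$ such that: if $\alpha=0$, $G$ is a bidegreed graph with $d_1=\cdots=d_{t-1}=n-1>d_t=\cdots=d_n$; if $\alpha>0$, $G$ is a bidegreed graph with $({}^\alpha m)_1>({}^\alpha m)_2=\cdots=({}^\alpha m)_n$ and $d_1=n-1>d_2=\cdots=d_n$. (For $\alpha<0$ only the first alternative occurs.)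
   Context: $A(G)$ is the adjacency matrix of $G$; $i\sim j$ means $v_i,v_j$ are adjacent; $d_i$ is the degree of $v_i$. The generalized average degree of $v_i$ is $({}^\alpha m)_i=\frac{\sum_{j\sim i}d_j^\alpha}{d_i^\alpha}$. $\rho(\cdot)$ is the spectral radius (largest eigenvalue for symmetric nonnegative matrices). A bidegreed graph is one whose vertex degrees take exactly two distinct values. An empty sum equals $0$. *)

theory Defs
  imports Complex_Main
begin

text \<open>A simple graph on vertex set {0..<n} (vertex v_(k+1) of the paper is k here),
given by an edge relation E.\<close>

definition simple_graph :: "nat \<Rightarrow> (nat \<Rightarrow> nat \<Rightarrow> bool) \<Rightarrow> bool" where
  "simple_graph n E \<longleftrightarrow> (\<forall>i j. E i j \<longrightarrow> E j i) \<and> (\<forall>i. \<not> E i i)"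

definition connected_graph :: "nat \<Rightarrow> (nat \<Rightarrow> nat \<Rightarrow> bool) \<Rightarrow> bool" where
  "connected_graph n E \<longleftrightarrow>
     (\<forall>u v. u < n \<longrightarrow> v < n \<longrightarrow> (\<lambda>a b. E a b \<and> a < n \<and> b < n)\<^sup>*\<^sup>* u v)"

definition nbrs :: "nat \<Rightarrow> (nat \<Rightarrow> nat \<Rightarrow> bool) \<Rightarrow> nat \<Rightarrow> nat set" where
  "nbrs n E i = {j. j < n \<and> E i j}"

definition deg :: "nat \<Rightarrow> (nat \<Rightarrow> nat \<Rightarrow> bool) \<Rightarrow> nat \<Rightarrow> nat" where
  "deg n E i = card (nbrs n E i)"

definition gavg :: "nat \<Rightarrow> (nat \<Rightarrow> nat \<Rightarrow> bool) \<Rightarrow> real \<Rightarrow> nat \<Rightarrow> real" where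
  "gavg n E \<alpha> i = (\<Sum>j\<in>nbrs n E i. real (deg n E j) powr \<alpha>) / real (deg n E i) powr \<alpha>"

text \<open>Eigenvalues of the adjacency matrix A(G) (real, since A(G) is symmetric).\<close>
definition adj_eigenvalues :: "nat \<Rightarrow> (nat \<Rightarrow> nat \<Rightarrow> bool) \<Rightarrow> real set" where
  "adj_eigenvalues n E = {\<mu>. \<exists>x :: nat \<Rightarrow> real. (\<exists>i<n. x i \<noteq> 0) \<and>
       (\<forall>i<n. (\<Sum>j<n. (if E i j then 1 else 0) * x j) = \<mu> * x i)}"

text \<open>Spectral radius = largest eigenvalue of the symmetric nonnegative matrix A(G).\<close>
definition adj_spectral_radius :: "nat \<Rightarrow> (nat \<Rightarrow> nat \<Rightarrow> bool) \<Rightarrow> real" where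
  "adj_spectral_radius n E = Max (adj_eigenvalues n E)"

definition bidegreed :: "nat \<Rightarrow> (nat \<Rightarrow> nat \<Rightarrow> bool) \<Rightarrow> bool" where
  "bidegreed n E \<longleftrightarrow> card (deg n E ` {0..<n}) = 2"

end

theory Submission
  imports Defs "Jordan_Normal_Form.Spectral_Radius"
begin

lemma adj_finite: "finite (adj_eigenvalues n E)"
proof -
  define A :: "real mat" where "A = mat n n (\<lambda>(i,j). if E i j then 1 else 0)"
  have A: "A \<in> carrier_mat n n" unfolding A_def by simp
  have "adj_eigenvalues n E \<subseteq> spectrum A"
  proof
    fix \<mu> assume "\<mu> \<in> adj_eigenvalues n E"
    then obtain x where x1: "\<exists>i<n. x i \<noteq> 0"
      and x2: "\<forall>i<n. (\<Sum>j<n. (if E i j then 1 else 0) * x j) = \<mu> * x i"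
      by (auto simp: adj_eigenvalues_def)
    have "eigenvector A (vec n x) \<mu>" unfolding eigenvector_def
    proof (intro conjI)
      show "vec n x \<in> carrier_vec (dim_row A)" using A by simp
      show "vec n x \<noteq> 0\<^sub>v (dim_row A)" using A x1
        by (metis carrier_matD(1) index_vec index_zero_vec(1))
      show "A *\<^sub>v vec n x = \<mu> \<cdot>\<^sub>v vec n x"
      proof (rule eq_vecI)
        fix i assume "i < dim_vec (\<mu> \<cdot>\<^sub>v vec n x)"
        hence i: "i < n" by simp
        have "(A *\<^sub>v vec n x) $ i = (\<Sum>j<n. (if E i j then 1 else 0) * x j)"
          using i unfolding A_def
          by (simp add: scalar_prod_def lessThan_atLeast0)
        also have "\<dots> = \<mu> * x i" using x2 i by simp
        finally show "(A *\<^sub>v vec n x) $ i = (\<mu> \<cdot>\<^sub>v vec n x) $ i" using i by simp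
      qed (simp add: A_def)
    qed
    then show "\<mu> \<in> spectrum A" unfolding spectrum_def eigenvalue_def by auto
  qed
  then show ?thesis using card_finite_spectrum(1)[OF A] finite_subset by blast
qed

lemma adj_nonempty:
  assumes n: "n > 0" and sym: "\<And>i j. E i j \<Longrightarrow> E j i"
  shows "adj_eigenvalues n E \<noteq> {}"
proof -
  define A :: "complex mat" where "A = mat n n (\<lambda>(i,j). if E i j then 1 else 0)"
  have A: "A \<in> carrier_mat n n" unfolding A_def by simp
  from spectrum_non_empty[OF A n] obtain l where "l \<in> spectrum A" by auto
  then obtain v where ev: "eigenvector A v l" unfolding spectrum_def eigenvalue_def by auto
  hence v: "v \<in> carrier_vec n" "v \<noteq> 0\<^sub>v n" "A *\<^sub>v v = l \<cdot>\<^sub>v v"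
    using A unfolding eigenvector_def by auto
  define a :: "nat \<Rightarrow> nat \<Rightarrow> real" where "a i j = (if E i j then 1 else 0)" for i j
  have asym: "a i j = a j i" for i j unfolding a_def using sym by auto
  define p where "p j = Re (v $ j)" for j
  define q where "q j = Im (v $ j)" for j
  have eqc: "(\<Sum>j<n. of_real (a i j) * v $ j) = l * v $ i" if i: "i < n" for i
  proof -
    have "(A *\<^sub>v v) $ i = (\<Sum>j<n. of_real (a i j) * v $ j)"
      using i v(1) unfolding A_def a_def
      by (auto simp: scalar_prod_def lessThan_atLeast0 intro!: sum.cong)
    moreover have "(l \<cdot>\<^sub>v v) $ i = l * v $ i" using v(1) i by simp
    ultimately show ?thesis using v(3) by simp
  qed
  have eqp: "(\<Sum>j<n. a i j * p j) = Re l * p i - Im l * q i" if i: "i < n" for i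
  proof -
    have "Re (\<Sum>j<n. of_real (a i j) * v $ j) = Re (l * v $ i)" using eqc[OF i] by simp
    thus ?thesis by (simp add: p_def q_def)
  qed
  have eqq: "(\<Sum>j<n. a i j * q j) = Im l * p i + Re l * q i" if i: "i < n" for i
  proof -
    have "Im (\<Sum>j<n. of_real (a i j) * v $ j) = Im (l * v $ i)" using eqc[OF i] by simp
    thus ?thesis by (simp add: p_def q_def)
  qed
  have symsum: "(\<Sum>i<n. q i * (\<Sum>j<n. a i j * p j)) = (\<Sum>i<n. p i * (\<Sum>j<n. a i j * q j))"
  proof -
    have "(\<Sum>i<n. q i * (\<Sum>j<n. a i j * p j)) = (\<Sum>i<n. \<Sum>j<n. q i * a i j * p j)"
      by (simp add: sum_distrib_left mult.assoc)
    also have "\<dots> = (\<Sum>j<n. \<Sum>i<n. q i * a i j * p j)" by (rule sum.swap)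
    also have "\<dots> = (\<Sum>j<n. p j * (\<Sum>i<n. a j i * q i))"
      by (simp add: sum_distrib_left asym mult.commute mult.left_commute)
    finally show ?thesis .
  qed
  have "(\<Sum>i<n. q i * (Re l * p i - Im l * q i)) = (\<Sum>i<n. p i * (Im l * p i + Re l * q i))"
    using symsum eqp eqq by simp
  hence "Im l * (\<Sum>i<n. (p i)^2 + (q i)^2) = 0"
    by (simp add: sum_distrib_left sum_subtractf sum.distrib algebra_simps power2_eq_square)
  moreover have "(\<Sum>i<n. (p i)^2 + (q i)^2) > 0"
  proof -
    obtain k where k: "k < n" "v $ k \<noteq> 0" using v(1,2) by (metis carrier_vecD eq_vecI index_zero_vec(1,2))
    hence "(p k)^2 + (q k)^2 > 0" unfolding p_def q_def
      by (metis add_pos_nonneg complex_eq_iff sum_power2_gt_zero_iff zero_complex.simps(1,2))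
    thus ?thesis using k(1) by (intro sum_pos2[of _ k]) auto
  qed
  ultimately have Iml: "Im l = 0" by simp
  obtain k where k: "k < n" "v $ k \<noteq> 0" using v(1,2) by (metis carrier_vecD eq_vecI index_zero_vec(1,2))
  show ?thesis
  proof (cases "p k = 0")
    case False
    have "Re l \<in> adj_eigenvalues n E" unfolding adj_eigenvalues_def
      using eqp Iml k False by (auto simp: a_def)
    thus ?thesis by auto
  next
    case True
    hence "q k \<noteq> 0" using k unfolding p_def q_def by (simp add: complex_eq_iff)
    have "Re l \<in> adj_eigenvalues n E" unfolding adj_eigenvalues_def
      using eqq Iml k \<open>q k \<noteq> 0\<close> by (auto simp: a_def mult.commute)
    thus ?thesis by auto
  qed
qed

locale gr =
  fixes n :: nat and E :: "nat \<Rightarrow> nat \<Rightarrow> bool" and \<alpha> :: real and i :: nat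
  assumes n2: "n \<ge> 2" and sg: "simple_graph n E" and cg: "connected_graph n E"
    and ord: "\<And>k l. k \<le> l \<Longrightarrow> l < n \<Longrightarrow> gavg n E \<alpha> k \<ge> gavg n E \<alpha> l"
    and iln: "i < n"
begin

definition "dd k = real (deg n E k) powr \<alpha>"
definition "NN = Max {real (deg n E b) powr \<alpha> / real (deg n E a) powr \<alpha> | a b. a < n \<and> b < n \<and> E a b}"
definition "rr = gavg n E \<alpha> i"
definition "SS = (\<Sum>k<i. gavg n E \<alpha> k - rr)"
definition "BB = (rr - NN + sqrt ((rr + NN)\<^sup>2 + 4 * NN * SS)) / 2"
definition "u k = (if k < i then 1 + (gavg n E \<alpha> k - rr) / (BB + NN) else 1)"
definition "tot k = (\<Sum>j\<in>nbrs n E k. dd j * u j)"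
definition "h k j = (if j \<in> nbrs n E k then dd j * (u j - 1) else 0)"
definition "h' k j = (if j = k then 0 else NN * dd k * (u j - 1))"

lemma symE: "E a b \<Longrightarrow> E b a" using sg unfolding simple_graph_def by blast
lemma irrE: "\<not> E a a" using sg unfolding simple_graph_def by blast

lemma nbrs_sub: "nbrs n E k \<subseteq> {..<n}" unfolding nbrs_def by auto
lemma fin_nbrs: "finite (nbrs n E k)" using nbrs_sub finite_subset by blast

lemma deg_pos: assumes k: "k < n" shows "deg n E k \<ge> 1"
proof -
  define v where "v = (if k = 0 then 1 else 0::nat)"
  have v: "v < n" "v \<noteq> k" using n2 unfolding v_def by auto
  have "(\<lambda>a b. E a b \<and> a < n \<and> b < n)\<^sup>*\<^sup>* k v" using cg k v unfolding connected_graph_def by blast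
  then obtain y where "E k y" "y < n"
    by (cases rule: converse_rtranclpE) (use v in auto)
  hence "y \<in> nbrs n E k" unfolding nbrs_def by auto
  hence "nbrs n E k \<noteq> {}" by auto
  thus ?thesis unfolding deg_def using fin_nbrs by (simp add: Suc_leI card_gt_0_iff)
qed

lemma dd_pos: "k < n \<Longrightarrow> dd k > 0"
  using deg_pos[of k] unfolding dd_def by simp

lemma gavg_eq: assumes k: "k < n"
  shows "(\<Sum>j\<in>nbrs n E k. dd j) = gavg n E \<alpha> k * dd k"
  using dd_pos[OF k] unfolding gavg_def dd_def by simp

lemma gavg_nonneg: "k < n \<Longrightarrow> gavg n E \<alpha> k \<ge> 0"
  unfolding gavg_def by (auto intro!: divide_nonneg_nonneg sum_nonneg)

definition "RS = {real (deg n E b) powr \<alpha> / real (deg n E a) powr \<alpha> | a b. a < n \<and> b < n \<and> E a b}"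

lemma RS_fin: "finite RS"
proof -
  have "RS = (\<lambda>(a,b). real (deg n E b) powr \<alpha> / real (deg n E a) powr \<alpha>) ` ({(a,b). E a b} \<inter> {..<n} \<times> {..<n})"
    unfolding RS_def by auto
  thus ?thesis by simp
qed

lemma edge_ex: "\<exists>a b. a < n \<and> b < n \<and> E a b"
proof -
  have "nbrs n E 0 \<noteq> {}" using deg_pos[of 0] n2 unfolding deg_def by auto
  then obtain x where "x < n" "E 0 x" unfolding nbrs_def by auto
  thus ?thesis using n2 by (intro exI[of _ 0] exI[of _ x]) auto
qed

lemma RS_ne: "RS \<noteq> {}" using edge_ex unfolding RS_def by auto

lemma NN_RS: "NN = Max RS" unfolding NN_def RS_def by simp

lemma ratio_le: assumes "a < n" "b < n" "E a b" shows "dd b \<le> NN * dd a"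
proof -
  have "dd b / dd a \<in> RS" unfolding RS_def dd_def using assms by auto
  hence "dd b / dd a \<le> NN" unfolding NN_RS using RS_fin by simp
  thus ?thesis using dd_pos[OF assms(1)] by (simp add: divide_le_eq mult.commute)
qed

lemma NN_ge1: "NN \<ge> 1"
proof -
  obtain a b where ab: "a < n" "b < n" "E a b" using edge_ex by auto
  have 1: "dd b \<le> NN * dd a" using ratio_le ab by simp
  have 2: "dd a \<le> NN * dd b" using ratio_le ab symE by simp
  have pa: "dd a > 0" "dd b > 0" using dd_pos ab by auto
  show ?thesis
  proof (rule ccontr)
    assume "\<not> NN \<ge> 1"
    hence "NN < 1" by simp
    hence "NN * dd a < dd a" "NN * dd b < dd b" using pa by auto
    thus False using 1 2 by simp
  qed
qed

lemma NN_pos: "NN > 0" using NN_ge1 by simp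

lemma rr_nonneg: "rr \<ge> 0" unfolding rr_def using gavg_nonneg iln by simp

lemma m_ge: "k < i \<Longrightarrow> gavg n E \<alpha> k \<ge> rr" unfolding rr_def using ord iln by simp
lemma m_le: "i \<le> k \<Longrightarrow> k < n \<Longrightarrow> gavg n E \<alpha> k \<le> rr" unfolding rr_def using ord by simp

lemma SS_nonneg: "SS \<ge> 0" unfolding SS_def using m_ge by (auto intro: sum_nonneg)

lemma sqrt_ge: "sqrt ((rr + NN)\<^sup>2 + 4 * NN * SS) \<ge> rr + NN"
proof -
  have "sqrt ((rr + NN)\<^sup>2) \<le> sqrt ((rr + NN)\<^sup>2 + 4 * NN * SS)"
    using NN_pos SS_nonneg by (intro real_sqrt_le_mono) simp
  thus ?thesis using rr_nonneg NN_pos by simp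
qed

lemma BB_ge: "BB \<ge> rr" unfolding BB_def using sqrt_ge by simp
lemma BBN_pos: "BB + NN > 0" using BB_ge rr_nonneg NN_pos by simp
lemma BB_nonneg: "BB \<ge> 0" using BB_ge rr_nonneg by simp

lemma BB_id: "(BB - rr) * (BB + NN) = NN * SS"
proof -
  define s where "s = sqrt ((rr + NN)\<^sup>2 + 4 * NN * SS)"
  have s2: "s^2 = (rr + NN)\<^sup>2 + 4 * NN * SS" unfolding s_def
    using NN_pos SS_nonneg rr_nonneg by (intro real_sqrt_pow2) simp
  have "(BB - rr) * (BB + NN) = (s^2 - (rr+NN)^2) / 4" unfolding BB_def s_def[symmetric]
    by (simp add: field_simps power2_eq_square)
  thus ?thesis using s2 by simp
qed

lemma u_ge: "u k \<ge> 1" unfolding u_def using m_ge BBN_pos by auto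
lemma u_pos: "u k > 0" using u_ge[of k] by simp
lemma u_gt: "k < i \<Longrightarrow> u k > 1 \<longleftrightarrow> gavg n E \<alpha> k > rr"
  unfolding u_def using BBN_pos by (simp add: divide_pos_pos zero_less_divide_iff)

lemma T_eq: "NN * (\<Sum>k<i. u k - 1) = BB - rr"
proof -
  have "(\<Sum>k<i. u k - 1) = (\<Sum>k<i. (gavg n E \<alpha> k - rr) / (BB + NN))"
    unfolding u_def by simp
  also have "\<dots> = SS / (BB + NN)" unfolding SS_def by (simp add: sum_divide_distrib)
  finally have "NN * (\<Sum>k<i. u k - 1) = NN * SS / (BB + NN)" by simp
  also have "\<dots> = BB - rr" using BB_id BBN_pos by (simp add: field_simps)
  finally show ?thesis .
qed

lemma nbrs_eq: "nbrs n E k = {j \<in> {..<n}. E k j}" unfolding nbrs_def by auto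

lemma sum_nbrs: "(\<Sum>j\<in>nbrs n E k. f j) = (\<Sum>j<n. if E k j then f j else 0)"
  unfolding nbrs_eq by (rule sum.inter_filter) simp

lemma tot_split: assumes k: "k < n"
  shows "tot k = gavg n E \<alpha> k * dd k + (\<Sum>j<i. h k j)"
proof -
  have "tot k = (\<Sum>j\<in>nbrs n E k. dd j) + (\<Sum>j\<in>nbrs n E k. dd j * (u j - 1))"
    unfolding tot_def by (simp add: sum.distrib[symmetric] algebra_simps)
  also have "(\<Sum>j\<in>nbrs n E k. dd j * (u j - 1)) = (\<Sum>j<n. h k j)"
    unfolding h_def sum_nbrs by (intro sum.cong) (auto simp: nbrs_def)
  also have "\<dots> = (\<Sum>j<i. h k j)"
  proof (rule sum.mono_neutral_cong_right)
    show "\<forall>x\<in>{..<n} - {..<i}. h k x = 0" unfolding h_def u_def by auto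
  qed (use iln in auto)
  finally show ?thesis using gavg_eq[OF k] by simp
qed

lemma h_le: assumes k: "k < n" and j: "j < i" shows "h k j \<le> h' k j"
proof (cases "j \<in> nbrs n E k")
  case True
  hence "j \<noteq> k" "j < n" "E k j" using irrE unfolding nbrs_def by auto
  moreover have "dd j \<le> NN * dd k" using ratio_le k \<open>j < n\<close> \<open>E k j\<close> by simp
  ultimately show ?thesis unfolding h_def h'_def using True u_ge[of j]
    by (simp add: mult_right_mono)
next
  case False
  thus ?thesis unfolding h_def h'_def using u_ge[of j] NN_pos dd_pos[OF k] by simp
qed

lemma sum_h': "(\<Sum>j<i. h' k j) = NN * dd k * (\<Sum>j<i. u j - 1) - (if k < i then NN * dd k * (u k - 1) else 0)"
proof -
  have "(\<Sum>j<i. h' k j) = (\<Sum>j<i. NN * dd k * (u j - 1) - (if j = k then NN * dd k * (u j - 1) else 0))"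
    unfolding h'_def by (intro sum.cong) auto
  also have "\<dots> = (\<Sum>j<i. NN * dd k * (u j - 1)) - (\<Sum>j<i. if j = k then NN * dd k * (u j - 1) else 0)"
    by (simp add: sum_subtractf)
  also have "(\<Sum>j<i. if j = k then NN * dd k * (u j - 1) else 0) = (if k < i then NN * dd k * (u k - 1) else 0)"
    by (simp add: sum.delta')
  finally show ?thesis by (simp add: sum_distrib_left)
qed

lemma T_eq2: "NN * dd k * (\<Sum>j<i. u j - 1) = dd k * (BB - rr)"
proof -
  have "NN * dd k * (\<Sum>j<i. u j - 1) = dd k * (NN * (\<Sum>j<i. u j - 1))" by (simp add: ac_simps)
  thus ?thesis using T_eq by simp
qed

lemma bound_id: assumes k: "k < n"
  shows "(if k < i then gavg n E \<alpha> k else rr) * dd k + (\<Sum>j<i. h' k j) = BB * dd k * u k"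
proof (cases "k < i")
  case True
  have uk: "(u k - 1) * (BB + NN) = gavg n E \<alpha> k - rr" unfolding u_def using True BBN_pos by simp
  have "NN * dd k * (\<Sum>j<i. u j - 1) = dd k * (BB - rr)" by (rule T_eq2)
  hence "(if k < i then gavg n E \<alpha> k else rr) * dd k + (\<Sum>j<i. h' k j)
     = dd k * (gavg n E \<alpha> k + BB - rr - NN * (u k - 1))" using True by (simp add: sum_h' algebra_simps)
  also have "gavg n E \<alpha> k + BB - rr - NN * (u k - 1) = BB * u k" using uk by (simp add: algebra_simps)
  finally show ?thesis by simp
next
  case False
  have "NN * dd k * (\<Sum>j<i. u j - 1) = dd k * (BB - rr)" by (rule T_eq2)
  hence "(\<Sum>j<i. h' k j) = dd k * (BB - rr)" using False by (simp add: sum_h')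
  moreover have "u k = 1" using False unfolding u_def by simp
  ultimately show ?thesis using False by (simp add: algebra_simps)
qed

lemma tot_le: assumes k: "k < n" shows "tot k \<le> BB * dd k * u k"
proof -
  have a: "gavg n E \<alpha> k * dd k \<le> (if k < i then gavg n E \<alpha> k else rr) * dd k"
    using m_le[of k] k dd_pos[OF k] by (auto intro: mult_right_mono)
  have b: "(\<Sum>j<i. h k j) \<le> (\<Sum>j<i. h' k j)" using h_le k by (intro sum_mono) auto
  show ?thesis using a b tot_split[OF k] bound_id[OF k] by linarith
qed

lemma tight_iff: assumes k: "k < n"
  shows "tot k = BB * dd k * u k \<longleftrightarrow> ((i \<le> k \<longrightarrow> gavg n E \<alpha> k = rr) \<and> (\<forall>j<i. h k j = h' k j))"
proof -
  have a: "gavg n E \<alpha> k * dd k \<le> (if k < i then gavg n E \<alpha> k else rr) * dd k"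
    using m_le[of k] k dd_pos[OF k] by (auto intro: mult_right_mono)
  have b: "(\<Sum>j<i. h k j) \<le> (\<Sum>j<i. h' k j)" using h_le k by (intro sum_mono) auto
  have c: "(\<Sum>j<i. h k j) = (\<Sum>j<i. h' k j) \<longleftrightarrow> (\<forall>j<i. h k j = h' k j)"
  proof -
    have "(\<Sum>j<i. h k j) = (\<Sum>j<i. h' k j) \<longleftrightarrow> (\<Sum>j<i. h' k j - h k j) = 0"
      by (auto simp: sum_subtractf)
    also have "\<dots> \<longleftrightarrow> (\<forall>j\<in>{..<i}. h' k j - h k j = 0)"
      using h_le k by (intro sum_nonneg_eq_0_iff) auto
    finally show ?thesis by auto
  qed
  have d: "gavg n E \<alpha> k * dd k = (if k < i then gavg n E \<alpha> k else rr) * dd k \<longleftrightarrow> (i \<le> k \<longrightarrow> gavg n E \<alpha> k = rr)"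
    using dd_pos[OF k] by auto
  have e: "tot k = BB * dd k * u k \<longleftrightarrow> (gavg n E \<alpha> k * dd k = (if k < i then gavg n E \<alpha> k else rr) * dd k \<and> (\<Sum>j<i. h k j) = (\<Sum>j<i. h' k j))"
  proof
    assume "tot k = BB * dd k * u k"
    thus "gavg n E \<alpha> k * dd k = (if k < i then gavg n E \<alpha> k else rr) * dd k \<and> (\<Sum>j<i. h k j) = (\<Sum>j<i. h' k j)"
      using a b tot_split[OF k] bound_id[OF k] by linarith
  next
    assume "gavg n E \<alpha> k * dd k = (if k < i then gavg n E \<alpha> k else rr) * dd k \<and> (\<Sum>j<i. h k j) = (\<Sum>j<i. h' k j)"
    thus "tot k = BB * dd k * u k" using tot_split[OF k] bound_id[OF k] by linarith
  qed
  show ?thesis by (simp only: e c d)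
qed

definition "Tight \<longleftrightarrow> (\<forall>k. i \<le> k \<and> k < n \<longrightarrow> gavg n E \<alpha> k = rr) \<and>
   (\<forall>j<i. gavg n E \<alpha> j > rr \<longrightarrow> (\<forall>k<n. k \<noteq> j \<longrightarrow> E k j \<and> dd j = NN * dd k))"

lemma allTight_iff: "(\<forall>k<n. tot k = BB * dd k * u k) \<longleftrightarrow> Tight"
proof
  assume A: "\<forall>k<n. tot k = BB * dd k * u k"
  show Tight unfolding Tight_def
  proof (rule conjI; intro allI impI)
    fix k assume "i \<le> k \<and> k < n" thus "gavg n E \<alpha> k = rr" using A tight_iff by blast
  next
    fix j k assume j: "j < i" and gj: "gavg n E \<alpha> j > rr" and k: "k < n" and kj: "k \<noteq> j"
    have hj: "h k j = h' k j" using A tight_iff k j by blast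
    have uj: "u j > 1" using u_gt j gj by simp
    have pos: "NN * dd k * (u j - 1) > 0" using NN_pos dd_pos[OF k] uj by simp
    have "j \<in> nbrs n E k"
    proof (rule ccontr)
      assume "j \<notin> nbrs n E k"
      hence "h k j = 0" unfolding h_def by simp
      moreover have "h' k j = NN * dd k * (u j - 1)" using kj unfolding h'_def by simp
      ultimately show False using hj pos by linarith
    qed
    hence "E k j" unfolding nbrs_def by simp
    moreover have "dd j * (u j - 1) = NN * dd k * (u j - 1)"
      using hj kj \<open>j \<in> nbrs n E k\<close> unfolding h_def h'_def by simp
    ultimately show "E k j \<and> dd j = NN * dd k" using uj by simp
  qed
next
  assume T: Tight
  show "\<forall>k<n. tot k = BB * dd k * u k"
  proof (intro allI impI)
    fix k assume k: "k < n"
    have "\<forall>j<i. h k j = h' k j"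
    proof (intro allI impI)
      fix j assume j: "j < i"
      show "h k j = h' k j"
      proof (cases "j = k")
        case True thus ?thesis unfolding h_def h'_def nbrs_def using irrE by simp
      next
        case False
        show ?thesis
        proof (cases "gavg n E \<alpha> j > rr")
          case True
          hence "E k j \<and> dd j = NN * dd k" using T j k False unfolding Tight_def by blast
          thus ?thesis unfolding h_def h'_def nbrs_def using k False j iln by simp
        next
          case gF: False
          hence "u j = 1" using m_ge[OF j] unfolding u_def by simp
          thus ?thesis unfolding h_def h'_def using False by simp
        qed
      qed
    qed
    moreover have "i \<le> k \<longrightarrow> gavg n E \<alpha> k = rr" using T k unfolding Tight_def by blast
    ultimately show "tot k = BB * dd k * u k" using tight_iff[OF k] by blast
  qed
qed

lemma ev_bound:
  assumes mu: "\<mu> \<in> adj_eigenvalues n E"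
  shows "\<bar>\<mu>\<bar> \<le> BB" and "\<mu> = BB \<Longrightarrow> \<forall>k<n. tot k = BB * dd k * u k"
proof -
  obtain x where x1: "\<exists>j<n. x j \<noteq> 0"
    and x2: "\<forall>k<n. (\<Sum>j<n. (if E k j then 1 else 0) * x j) = \<mu> * x k"
    using mu by (auto simp: adj_eigenvalues_def)
  define w where "w j = \<bar>x j\<bar> / (dd j * u j)" for j
  have ddu: "dd j * u j > 0" if "j < n" for j using dd_pos[OF that] u_pos[of j] by simp
  have xw: "\<bar>x j\<bar> = dd j * u j * w j" if "j < n" for j using dd_pos[OF that] u_pos[of j] unfolding w_def by (simp add: field_simps)
  have w0: "w j \<ge> 0" for j unfolding w_def using u_pos[of j]
    by (cases "j < n") (auto intro!: divide_nonneg_pos mult_pos_pos dd_pos simp: dd_def)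
  have ineq: "\<bar>\<mu>\<bar> * \<bar>x k\<bar> \<le> (\<Sum>j\<in>nbrs n E k. dd j * u j * w j)" if k: "k < n" for k
  proof -
    have "\<bar>\<mu>\<bar> * \<bar>x k\<bar> = \<bar>\<Sum>j\<in>nbrs n E k. x j\<bar>"
    proof -
      have ifm: "\<And>P (y::real). (if P then 1 else 0) * y = (if P then y else 0)" by simp
      have "(\<Sum>j\<in>nbrs n E k. x j) = \<mu> * x k" using x2 k by (simp only: ifm sum_nbrs)
      thus ?thesis by (simp add: abs_mult)
    qed
    also have "\<dots> \<le> (\<Sum>j\<in>nbrs n E k. \<bar>x j\<bar>)" by (rule sum_abs)
    also have "\<dots> = (\<Sum>j\<in>nbrs n E k. dd j * u j * w j)"
      using xw nbrs_sub by (intro sum.cong) auto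
    finally show ?thesis .
  qed
  define M where "M = Max (w ` {..<n})"
  have Mge: "w j \<le> M" if "j < n" for j unfolding M_def using that by simp
  have "M \<in> w ` {..<n}" unfolding M_def using n2 by (intro Max_in) (auto simp: lessThan_empty_iff)
  then obtain k0 where k0: "k0 < n" "w k0 = M" by auto
  have Mpos: "M > 0"
  proof -
    obtain j where j: "j < n" "x j \<noteq> 0" using x1 by auto
    have "w j > 0" unfolding w_def using j ddu[OF j(1)] by simp
    thus ?thesis using Mge[OF j(1)] by simp
  qed
  have le2: "(\<Sum>j\<in>nbrs n E k. dd j * u j * w j) \<le> M * tot k" for k
  proof -
    have "(\<Sum>j\<in>nbrs n E k. dd j * u j * w j) \<le> (\<Sum>j\<in>nbrs n E k. dd j * u j * M)"
      using Mge nbrs_sub ddu by (intro sum_mono mult_left_mono) (auto simp: less_imp_le subset_iff)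
    thus ?thesis unfolding tot_def by (simp add: sum_distrib_left mult.commute)
  qed
  have chain: "\<bar>\<mu>\<bar> * (M * (dd k * u k)) \<le> M * tot k" if k: "k < n" "w k = M" for k
  proof -
    have "\<bar>x k\<bar> = M * (dd k * u k)" using xw[OF k(1)] k(2) by simp
    thus ?thesis using ineq[OF k(1)] le2[of k] by simp
  qed
  show "\<bar>\<mu>\<bar> \<le> BB"
  proof -
    have "\<bar>\<mu>\<bar> * (M * (dd k0 * u k0)) \<le> M * (BB * dd k0 * u k0)"
      using chain[OF k0] tot_le[OF k0(1)] Mpos by (meson mult_left_mono less_imp_le order_trans)
    hence "\<bar>\<mu>\<bar> * (M * (dd k0 * u k0)) \<le> BB * (M * (dd k0 * u k0))" by (simp add: ac_simps)
    thus ?thesis using Mpos ddu[OF k0(1)] by (metis mult_le_cancel_right_pos mult_pos_pos)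
  qed
  assume eq: "\<mu> = BB"
  have stp: "tot k = BB * dd k * u k \<and> (\<forall>j. E k j \<and> j < n \<longrightarrow> w j = M)"
    if k: "k < n" "w k = M" for k
  proof -
    have absmu: "\<bar>\<mu>\<bar> = BB" using eq BB_nonneg by simp
    have a1: "BB * (M * (dd k * u k)) \<le> (\<Sum>j\<in>nbrs n E k. dd j * u j * w j)"
      using ineq[OF k(1)] xw[OF k(1)] k(2) absmu by (simp add: ac_simps)
    have a3: "M * tot k \<le> M * (BB * dd k * u k)" using tot_le[OF k(1)] Mpos by simp
    have e0: "M * (BB * dd k * u k) \<le> M * tot k" using a1 le2[of k] by (simp add: ac_simps)
    have e2: "tot k = BB * dd k * u k"
      using e0 tot_le[OF k(1)] Mpos by (meson antisym mult_le_cancel_left_pos)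
    have e1: "(\<Sum>j\<in>nbrs n E k. dd j * u j * w j) = M * tot k"
      using a1 le2[of k] e2 by (simp add: ac_simps)
    have "(\<Sum>j\<in>nbrs n E k. dd j * u j * (M - w j)) = 0"
      using e1 unfolding tot_def by (simp add: sum_subtractf algebra_simps sum_distrib_left)
    hence z: "\<forall>j\<in>nbrs n E k. dd j * u j * (M - w j) = 0"
      using fin_nbrs Mge nbrs_sub ddu
      by (subst sum_nonneg_eq_0_iff[symmetric]) (auto intro!: mult_nonneg_nonneg simp: subset_iff less_imp_le)
    have "\<forall>j. E k j \<and> j < n \<longrightarrow> w j = M"
    proof (intro allI impI)
      fix j assume "E k j \<and> j < n"
      hence "j \<in> nbrs n E k" "j < n" unfolding nbrs_def by auto
      thus "w j = M" using z ddu[of j] by fastforce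
    qed
    thus ?thesis using e2 by simp
  qed
  have allM: "w k = M" if k: "k < n" for k
  proof -
    have "(\<lambda>a b. E a b \<and> a < n \<and> b < n)\<^sup>*\<^sup>* k0 k" using cg k0(1) k unfolding connected_graph_def by blast
    thus ?thesis
    proof (induction rule: rtranclp_induct)
      case base thus ?case using k0 by simp
    next
      case (step y z) thus ?case using stp by blast
    qed
  qed
  show "\<forall>k<n. tot k = BB * dd k * u k" using stp allM by blast
qed

lemma main_spec:
  assumes fin: "finite (adj_eigenvalues n E)" and ne: "adj_eigenvalues n E \<noteq> {}"
  shows "adj_spectral_radius n E \<le> BB \<and> (adj_spectral_radius n E = BB \<longleftrightarrow> Tight)"
proof -
  have rin: "adj_spectral_radius n E \<in> adj_eigenvalues n E"
    unfolding adj_spectral_radius_def using fin ne by simp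
  have le: "adj_spectral_radius n E \<le> BB" using ev_bound(1)[OF rin] by simp
  have "adj_spectral_radius n E = BB \<longleftrightarrow> Tight"
  proof
    assume "adj_spectral_radius n E = BB"
    thus Tight using ev_bound(2)[OF rin] allTight_iff by simp
  next
    assume T: Tight
    hence tt: "\<forall>k<n. tot k = BB * dd k * u k" using allTight_iff by simp
    have "BB \<in> adj_eigenvalues n E" unfolding adj_eigenvalues_def
    proof (intro CollectI exI[of _ "\<lambda>k. dd k * u k"] conjI)
      show "\<exists>j<n. dd j * u j \<noteq> 0" using n2 dd_pos[of 0] u_pos[of 0] by (intro exI[of _ 0]) auto
      show "\<forall>k<n. (\<Sum>j<n. (if E k j then 1 else 0) * (dd j * u j)) = BB * (dd k * u k)"
      proof -
        have ifm: "\<And>P (y::real). (if P then 1 else 0) * y = (if P then y else 0)" by simp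
        show ?thesis using tt unfolding tot_def by (simp only: ifm sum_nbrs mult.assoc)
      qed
    qed
    hence "BB \<le> adj_spectral_radius n E" unfolding adj_spectral_radius_def using fin by simp
    thus "adj_spectral_radius n E = BB" using le by simp
  qed
  thus ?thesis using le by simp
qed

end

context gr begin

lemma nbrs_sub2: "nbrs n E k \<subseteq> {..<n} - {k}" unfolding nbrs_def using irrE by auto

lemma deg_le: assumes kn: "k < n" shows "deg n E k \<le> n - 1"
proof -
  have "deg n E k \<le> card ({..<n} - {k})" unfolding deg_def using nbrs_sub2[of k]
    by (intro card_mono) auto
  also have "\<dots> \<le> n - 1" using kn by simp
  finally show ?thesis .
qed

lemma full_iff: assumes j: "j < n"
  shows "deg n E j = n - 1 \<longleftrightarrow> (\<forall>k<n. k \<noteq> j \<longrightarrow> E j k)"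
proof
  assume d: "deg n E j = n - 1"
  have "nbrs n E j = {..<n} - {j}"
  proof (rule card_subset_eq)
    show "card (nbrs n E j) = card ({..<n} - {j})" using d j unfolding deg_def by simp
  qed (use nbrs_sub2[of j] in auto)
  thus "\<forall>k<n. k \<noteq> j \<longrightarrow> E j k" unfolding nbrs_def by auto
next
  assume "\<forall>k<n. k \<noteq> j \<longrightarrow> E j k"
  hence "nbrs n E j = {..<n} - {j}" unfolding nbrs_def using irrE by auto
  thus "deg n E j = n - 1" using j unfolding deg_def by simp
qed

lemma dd_inj: assumes "\<alpha> \<noteq> 0" "a < n" "b < n" "dd a = dd b" shows "deg n E a = deg n E b"
proof -
  have "(real (deg n E a) powr \<alpha>) powr (1/\<alpha>) = (real (deg n E b) powr \<alpha>) powr (1/\<alpha>)"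
    using assms(4) unfolding dd_def by simp
  hence "real (deg n E a) = real (deg n E b)" using assms(1) deg_pos[OF assms(2)] deg_pos[OF assms(3)]
    by (simp add: powr_powr)
  thus ?thesis by simp
qed

lemma alpha0_dd: "\<alpha> = 0 \<Longrightarrow> k < n \<Longrightarrow> dd k = 1"
  unfolding dd_def using deg_pos[of k] by simp

lemma gavg_dd: "k < n \<Longrightarrow> gavg n E \<alpha> k = (\<Sum>j\<in>nbrs n E k. dd j) / dd k"
  unfolding gavg_def dd_def by simp

lemma alpha0_gavg: "\<alpha> = 0 \<Longrightarrow> k < n \<Longrightarrow> gavg n E \<alpha> k = real (deg n E k)"
proof -
  assume a: "\<alpha> = 0" and k: "k < n"
  have "(\<Sum>j\<in>nbrs n E k. dd j) = (\<Sum>j\<in>nbrs n E k. 1)" using alpha0_dd[OF a] nbrs_sub by (intro sum.cong) auto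
  thus ?thesis using gavg_dd[OF k] alpha0_dd[OF a k] unfolding deg_def by simp
qed

lemma alpha0_NN: "\<alpha> = 0 \<Longrightarrow> NN = 1"
proof -
  assume a: "\<alpha> = 0"
  have "RS = {1}"
  proof -
    have "RS \<subseteq> {1}" unfolding RS_def using alpha0_dd[OF a] unfolding dd_def by auto
    thus ?thesis using RS_ne by auto
  qed
  thus ?thesis unfolding NN_RS by simp
qed

lemma image_two: assumes "\<forall>k<n. deg n E k = a \<or> deg n E k = b" "p < n" "deg n E p = a" "q < n" "deg n E q = b" "a \<noteq> b"
  shows "bidegreed n E"
proof -
  have "deg n E ` {0..<n} = {a, b}"
  proof
    show "deg n E ` {0..<n} \<subseteq> {a, b}" using assms(1) by auto
    show "{a, b} \<subseteq> deg n E ` {0..<n}" using assms(2-5) by (auto intro!: image_eqI)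
  qed
  thus ?thesis unfolding bidegreed_def using assms(6) by simp
qed

lemma all_full: assumes "\<forall>k<n. deg n E k = n - 1" shows "\<forall>k<n. gavg n E \<alpha> k = real (n - 1)"
proof (intro allI impI)
  fix k assume k: "k < n"
  have "(\<Sum>j\<in>nbrs n E k. dd j) = (\<Sum>j\<in>nbrs n E k. dd k)"
  proof (intro sum.cong refl)
    fix j assume "j \<in> nbrs n E k"
    hence "j < n" using nbrs_sub by auto
    thus "dd j = dd k" using assms k unfolding dd_def by simp
  qed
  hence "gavg n E \<alpha> k = real (deg n E k)" using gavg_dd[OF k] dd_pos[OF k] unfolding deg_def by simp
  thus "gavg n E \<alpha> k = real (n - 1)" using assms k by simp
qed

end

context gr begin

definition "C1 \<longleftrightarrow> (\<forall>k<n. gavg n E \<alpha> k = gavg n E \<alpha> 0)"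
definition "C2a t \<longleftrightarrow> (\<alpha> = 0 \<and> bidegreed n E \<and> (\<forall>k<t. deg n E k = n - 1) \<and> deg n E t < n - 1 \<and>
             (\<forall>k. t \<le> k \<and> k < n \<longrightarrow> deg n E k = deg n E t))"
definition "C2b \<longleftrightarrow> (\<alpha> > 0 \<and> bidegreed n E \<and> gavg n E \<alpha> 0 > gavg n E \<alpha> 1 \<and> (\<forall>k. 1 \<le> k \<and> k < n \<longrightarrow> gavg n E \<alpha> k = gavg n E \<alpha> 1) \<and>
             deg n E 0 = n - 1 \<and> deg n E 0 > deg n E 1 \<and>
             (\<forall>k. 1 \<le> k \<and> k < n \<longrightarrow> deg n E k = deg n E 1))"

lemma C1_Tight: "C1 \<Longrightarrow> Tight"
proof -
  assume C1
  hence c: "\<forall>k<n. gavg n E \<alpha> k = gavg n E \<alpha> 0" unfolding C1_def .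
  have "\<forall>k<n. gavg n E \<alpha> k = rr" unfolding rr_def
  proof (intro allI impI)
    fix k assume "k < n"
    thus "gavg n E \<alpha> k = gavg n E \<alpha> i" using c iln by metis
  qed
  thus Tight unfolding Tight_def using iln by auto
qed

lemma C2a_Tight: assumes C: "C2a t" and t: "1 \<le> t" "t \<le> i" shows Tight
proof -
  have a0: "\<alpha> = 0" using C unfolding C2a_def by blast
  have D0: "\<forall>k<t. deg n E k = n - 1" "\<forall>k. t \<le> k \<and> k < n \<longrightarrow> deg n E k = deg n E t"
    using C unfolding C2a_def by blast+
  have "deg n E i = deg n E t" using D0(2) t(2) iln by blast
  hence rr0: "rr = real (deg n E t)" unfolding rr_def using alpha0_gavg[OF a0 iln] by simp
  show Tight unfolding Tight_def
  proof (rule conjI; intro allI impI)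
    fix k assume k: "i \<le> k \<and> k < n"
    hence "deg n E k = deg n E t" using D0(2) t(2) by (meson le_trans)
    thus "gavg n E \<alpha> k = rr" using alpha0_gavg[OF a0] k rr0 by simp
  next
    fix j k assume j: "j < i" and g: "rr < gavg n E \<alpha> j" and k: "k < n" and kj: "k \<noteq> j"
    have jn: "j < n" using j iln by simp
    have "j < t"
    proof (rule ccontr)
      assume "\<not> j < t"
      hence "deg n E j = deg n E t" using D0(2) jn by (meson not_less)
      thus False using g rr0 alpha0_gavg[OF a0 jn] by simp
    qed
    hence "deg n E j = n - 1" using D0(1) by simp
    hence "E j k" using full_iff[OF jn] k kj by simp
    thus "E k j \<and> dd j = NN * dd k" using symE alpha0_dd[OF a0] alpha0_NN[OF a0] k jn by simp
  qed
qed

lemma C2b_Tight: assumes C: C2b and i1: "1 \<le> i" shows Tight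
proof -
  have ap: "\<alpha> > 0" and g01: "gavg n E \<alpha> 0 > gavg n E \<alpha> 1"
    and gk: "\<forall>k. 1 \<le> k \<and> k < n \<longrightarrow> gavg n E \<alpha> k = gavg n E \<alpha> 1"
    and d0: "deg n E 0 = n - 1" and d01: "deg n E 0 > deg n E 1"
    and dk: "\<forall>k. 1 \<le> k \<and> k < n \<longrightarrow> deg n E k = deg n E 1"
    using C unfolding C2b_def by blast+
  have n1: "1 < n" using n2 by simp
  have rr1: "rr = gavg n E \<alpha> 1" unfolding rr_def using gk[rule_format, of i] i1 iln by simp
  have full0: "\<forall>k<n. k \<noteq> 0 \<longrightarrow> E 0 k" using d0 full_iff[of 0] n1 by simp
  have dd01: "dd 1 < dd 0" unfolding dd_def using ap d01 deg_pos[OF n1] by (simp add: powr_less_mono2)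
  have ddk: "dd k = dd 1" if "1 \<le> k" "k < n" for k unfolding dd_def using dk[rule_format, of k] that by simp
  have p1: "dd 1 > 0" using dd_pos n1 by simp
  have NNv: "NN = dd 0 / dd 1"
  proof -
    have "E 1 0" using full0 n1 symE by simp
    hence mem: "dd 0 / dd 1 \<in> RS" unfolding RS_def dd_def
      using n1 by (intro CollectI exI[of _ 1] exI[of _ 0]) simp
    have ub: "x \<le> dd 0 / dd 1" if xin: "x \<in> RS" for x
    proof -
      obtain a b where ab: "a < n" "b < n" "E a b" "x = dd b / dd a"
        using xin unfolding RS_def dd_def by auto
      have q: "1 \<le> dd 0 / dd 1" using dd01 p1 by simp
      show ?thesis
      proof (cases "a = 0")
        case True
        hence "b \<noteq> 0" using ab(3) irrE by metis
        hence "x = dd 1 / dd 0" using ab True ddk[of b] by simp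
        also have "\<dots> \<le> 1" using dd01 p1 by simp
        finally show ?thesis using q by simp
      next
        case False
        show ?thesis
        proof (cases "b = 0")
          case True thus ?thesis using ab False ddk[of a] by simp
        next
          case b: False
          hence "x = 1" using ab False ddk[of a] ddk[of b] p1 by simp
          thus ?thesis using q by simp
        qed
      qed
    qed
    show ?thesis unfolding NN_RS using mem ub RS_fin by (intro Max_eqI) auto
  qed
  show Tight unfolding Tight_def
  proof (rule conjI; intro allI impI)
    fix k assume "i \<le> k \<and> k < n"
    thus "gavg n E \<alpha> k = rr" using gk[rule_format, of k] i1 rr1 by simp
  next
    fix j k assume j: "j < i" and g: "rr < gavg n E \<alpha> j" and k: "k < n" and kj: "k \<noteq> j"
    have j0: "j = 0"
    proof (rule ccontr)
      assume "j \<noteq> 0"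
      hence "gavg n E \<alpha> j = rr" using gk[rule_format, of j] rr1 j iln by simp
      thus False using g by simp
    qed
    have "E k j" using full0 kj k j0 symE by auto
    moreover have "dd j = NN * dd k" using NNv ddk[of k] kj k j0 p1 by simp
    ultimately show "E k j \<and> dd j = NN * dd k" by simp
  qed
qed

end

context gr begin

lemma Tight_Cond: assumes T: Tight shows "C1 \<or> (\<exists>t. 1 \<le> t \<and> t \<le> i \<and> (C2a t \<or> C2b))"
proof -
  have T1: "gavg n E \<alpha> k = rr" if "i \<le> k" "k < n" for k using T that unfolding Tight_def by blast
  have T2: "E k j \<and> dd j = NN * dd k" if "j < i" "rr < gavg n E \<alpha> j" "k < n" "k \<noteq> j" for j k
    using T that unfolding Tight_def by blast
  have Pfull: "deg n E j = n - 1" if j: "j < i" "rr < gavg n E \<alpha> j" for j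
  proof -
    have jn: "j < n" using j iln by simp
    have "\<forall>k<n. k \<noteq> j \<longrightarrow> E j k" using T2[OF j] symE by blast
    thus ?thesis using full_iff[OF jn] by simp
  qed
  have gi: "gavg n E \<alpha> i = rr" unfolding rr_def by simp
  show ?thesis
  proof (cases "\<exists>j<i. rr < gavg n E \<alpha> j")
    case False
    have all: "gavg n E \<alpha> k = rr" if k: "k < n" for k
    proof (cases "k < i")
      case True thus ?thesis using False m_ge[OF True] by force
    next
      case False thus ?thesis using T1 k by simp
    qed
    have "C1" unfolding C1_def using all n2 by simp
    thus ?thesis by simp
  next
    case True
    then obtain j0 where j0: "j0 < i" "rr < gavg n E \<alpha> j0" by blast
    have j0n: "j0 < n" using j0 iln by simp
    have g0: "rr < gavg n E \<alpha> 0" using ord[of 0 j0] j0n j0 by simp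
    have i1: "1 \<le> i" using j0 by simp
    have d0: "deg n E 0 = n - 1" using Pfull[of 0] i1 g0 by simp
    have dj0: "deg n E j0 = n - 1" using Pfull j0 by simp
    have noFull: "deg n E k1 \<noteq> n - 1" if an0: "\<alpha> \<noteq> 0" and k1: "k1 < n" "k1 \<noteq> j0" for k1
    proof
      assume dk1: "deg n E k1 = n - 1"
      have "dd k1 = dd j0" unfolding dd_def using dk1 dj0 by simp
      moreover have "dd j0 = NN * dd k1" using T2[OF j0 k1] by simp
      ultimately have NN1: "NN = 1" using dd_pos[OF k1(1)] by simp
      have "\<forall>k<n. deg n E k = n - 1"
      proof (intro allI impI)
        fix k assume kn: "k < n"
        show "deg n E k = n - 1"
        proof (cases "k = j0")
          case True thus ?thesis using dj0 by simp
        next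
          case False
          hence "dd j0 = dd k" using T2[OF j0 kn False] NN1 by simp
          hence "deg n E j0 = deg n E k" using dd_inj[OF an0 j0n kn] by simp
          thus ?thesis using dj0 by simp
        qed
      qed
      from all_full[OF this] have "gavg n E \<alpha> j0 = gavg n E \<alpha> i" using j0n iln by simp
      thus False using j0 gi by simp
    qed
    consider (z) "\<alpha> = 0" | (neg) "\<alpha> < 0" | (pos) "\<alpha> > 0" by linarith
    thus ?thesis
    proof cases
      case z
      define t where "t = (LEAST k. gavg n E \<alpha> k = rr)"
      have tle: "t \<le> i" unfolding t_def by (rule Least_le) (rule gi)
      have tr: "gavg n E \<alpha> t = rr" unfolding t_def by (rule LeastI[of _ i]) (rule gi)
      have tn: "t < n" using tle iln by simp
      have t1: "1 \<le> t"
      proof (rule ccontr)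
        assume "\<not> 1 \<le> t" hence "t = 0" by simp
        thus False using tr g0 by simp
      qed
      have below: "deg n E k = n - 1" if k: "k < t" for k
      proof -
        have "gavg n E \<alpha> k \<noteq> rr" using not_less_Least[of k "\<lambda>k. gavg n E \<alpha> k = rr"] k unfolding t_def by blast
        moreover have ki: "k < i" using k tle by simp
        ultimately have "rr < gavg n E \<alpha> k" using m_ge[OF ki] by simp
        thus ?thesis using Pfull ki by simp
      qed
      have above: "gavg n E \<alpha> k = rr" if k: "t \<le> k" "k < n" for k
      proof -
        have "gavg n E \<alpha> k \<le> rr" using ord[OF k] tr by simp
        moreover have "gavg n E \<alpha> k \<ge> rr" using m_ge[of k] T1[of k] k by (cases "k < i") auto
        ultimately show ?thesis by simp
      qed
      have degk: "deg n E k = deg n E t" if k: "t \<le> k" "k < n" for k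
      proof -
        have "real (deg n E k) = real (deg n E t)"
          using above[OF k] tr alpha0_gavg[OF z k(2)] alpha0_gavg[OF z tn] by simp
        thus ?thesis by simp
      qed
      have dt: "deg n E t < n - 1"
      proof -
        have "real (deg n E t) < real (deg n E 0)"
          using tr g0 alpha0_gavg[OF z tn] alpha0_gavg[OF z] n2 by simp
        thus ?thesis using d0 by simp
      qed
      have bd: "bidegreed n E"
      proof (rule image_two[of "n - 1" "deg n E t" 0 t])
        show "\<forall>k<n. deg n E k = n - 1 \<or> deg n E k = deg n E t"
        proof (intro allI impI)
          fix k assume "k < n"
          thus "deg n E k = n - 1 \<or> deg n E k = deg n E t"
          proof (cases "k < t")
            case True thus ?thesis using below by simp
          next
            case False thus ?thesis using degk[of k] \<open>k < n\<close> by simp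
          qed
        qed
      qed (use n2 d0 tn dt in auto)
      have "C2a t" unfolding C2a_def using z bd below dt degk by blast
      thus ?thesis using t1 tle by blast
    next
      case neg
      define k where "k = (if j0 = 0 then 1 else 0::nat)"
      have k: "k < n" "k \<noteq> j0" using n2 unfolding k_def by auto
      have an0: "\<alpha> \<noteq> 0" using neg by simp
      have "deg n E k \<noteq> n - 1" using noFull[OF an0 k] .
      hence dk: "deg n E k < n - 1" using deg_le[OF k(1)] by linarith
      have "real (deg n E j0) powr \<alpha> < real (deg n E k) powr \<alpha>"
      proof (rule powr_less_mono2_neg)
        show "\<alpha> < 0" by (rule neg)
        show "0 < real (deg n E k)" using deg_pos[OF k(1)] by simp
        show "real (deg n E k) < real (deg n E j0)" using dk dj0 by simp
      qed
      hence "dd j0 < dd k" unfolding dd_def .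
      moreover have "dd j0 = NN * dd k" using T2[OF j0 k] by simp
      ultimately have "NN < 1" using dd_pos[OF k(1)] by simp
      thus ?thesis using NN_ge1 by simp
    next
      case pos
      have an0: "\<alpha> \<noteq> 0" using pos by simp
      have n1: "1 < n" using n2 by simp
      have jz: "j0 = 0"
      proof (rule ccontr)
        assume "j0 \<noteq> 0"
        have "deg n E 0 \<noteq> n - 1" by (rule noFull[OF an0]) (use n2 \<open>j0 \<noteq> 0\<close> in auto)
        thus False using d0 by blast
      qed
      have nf: "deg n E k \<noteq> n - 1" if "1 \<le> k" "k < n" for k
        by (rule noFull[OF an0]) (use that jz in auto)
      have i0: "0 < i" using i1 by simp
      have ddk: "dd k = dd 1" if "1 \<le> k" "k < n" for k
      proof -
        have "k \<noteq> 0" using that by simp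
        hence "dd 0 = NN * dd k" using T2[OF i0 g0 that(2)] by blast
        moreover have "dd 0 = NN * dd 1" using T2[OF i0 g0 n1] by simp
        ultimately have "NN * dd k = NN * dd 1" by linarith
        thus ?thesis using NN_pos by (metis less_irrefl mult_cancel_left)
      qed
      have dk: "deg n E k = deg n E 1" if "1 \<le> k" "k < n" for k
        using dd_inj[OF an0 that(2) n1 ddk[OF that]] .
      have d1: "deg n E 1 < n - 1" using nf[of 1] deg_le[OF n1] n1 by linarith
      have gk: "gavg n E \<alpha> k = rr" if k: "1 \<le> k" "k < n" for k
      proof (cases "k < i")
        case True
        have "\<not> rr < gavg n E \<alpha> k" using Pfull[OF True] nf[OF k] by blast
        thus ?thesis using m_ge[OF True] by linarith
      next
        case False thus ?thesis using T1[of k] k by linarith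
      qed
      have bd: "bidegreed n E"
      proof (rule image_two[of "n - 1" "deg n E 1" 0 1])
        show "\<forall>k<n. deg n E k = n - 1 \<or> deg n E k = deg n E 1"
        proof (intro allI impI)
          fix k assume "k < n"
          thus "deg n E k = n - 1 \<or> deg n E k = deg n E 1"
          proof (cases "k = 0")
            case True thus ?thesis using d0 by simp
          next
            case False thus ?thesis using dk[of k] \<open>k < n\<close> by simp
          qed
        qed
        show "0 < n" using n2 by simp
        show "deg n E 0 = n - 1" by (rule d0)
        show "1 < n" by (rule n1)
        show "deg n E 1 = deg n E 1" ..
        show "n - 1 \<noteq> deg n E 1" using d1 by simp
      qed
      have g1: "gavg n E \<alpha> 1 = rr" using gk[of 1] n1 by simp
      have "C2b" unfolding C2b_def
      proof (intro conjI)
        show "\<forall>k. 1 \<le> k \<and> k < n \<longrightarrow> gavg n E \<alpha> k = gavg n E \<alpha> 1"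
        proof (intro allI impI)
          fix k assume "1 \<le> k \<and> k < n"
          thus "gavg n E \<alpha> k = gavg n E \<alpha> 1" using gk[of k] g1 by simp
        qed
        show "\<forall>k. 1 \<le> k \<and> k < n \<longrightarrow> deg n E k = deg n E 1" using dk by blast
        show "0 < \<alpha>" by (rule pos)
        show "bidegreed n E" by (rule bd)
        show "gavg n E \<alpha> 1 < gavg n E \<alpha> 0" using g0 g1 by simp
        show "deg n E 0 = n - 1" by (rule d0)
        show "deg n E 1 < deg n E 0" using d0 d1 by simp
      qed
      thus ?thesis using i1 by blast
    qed
  qed
qed

end

theorem theorem3:
  fixes n :: nat and E :: "nat \<Rightarrow> nat \<Rightarrow> bool" and \<alpha> :: real and i :: nat
  assumes "n \<ge> 2"
    and "simple_graph n E"
    and "connected_graph n E"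
    and "\<And>k l. k \<le> l \<Longrightarrow> l < n \<Longrightarrow> gavg n E \<alpha> k \<ge> gavg n E \<alpha> l"
    and "i < n"
  defines "N \<equiv> Max {real (deg n E b) powr \<alpha> / real (deg n E a) powr \<alpha> | a b.
                      a < n \<and> b < n \<and> E a b}"
  defines "m \<equiv> gavg n E \<alpha>"
  defines "B \<equiv> (m i - N + sqrt ((m i + N)\<^sup>2 + 4 * N * (\<Sum>k<i. m k - m i))) / 2"
  shows "adj_spectral_radius n E \<le> B \<and>
    (adj_spectral_radius n E = B \<longleftrightarrow>
      (\<forall>k<n. m k = m 0) \<or>
      (\<exists>t. 1 \<le> t \<and> t \<le> i \<and>
         ((\<alpha> = 0 \<and> bidegreed n E \<and> (\<forall>k<t. deg n E k = n - 1) \<and> deg n E t < n - 1 \<and>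
             (\<forall>k. t \<le> k \<and> k < n \<longrightarrow> deg n E k = deg n E t)) \<or>
          (\<alpha> > 0 \<and> bidegreed n E \<and> m 0 > m 1 \<and> (\<forall>k. 1 \<le> k \<and> k < n \<longrightarrow> m k = m 1) \<and>
             deg n E 0 = n - 1 \<and> deg n E 0 > deg n E 1 \<and>
             (\<forall>k. 1 \<le> k \<and> k < n \<longrightarrow> deg n E k = deg n E 1)))))"
proof -
  interpret gr n E \<alpha> i using assms(1-5) by unfold_locales
  have fin: "finite (adj_eigenvalues n E)" by (rule adj_finite)
  have ne: "adj_eigenvalues n E \<noteq> {}" using adj_nonempty[of n E] assms(1) symE by force
  have ms: "adj_spectral_radius n E \<le> BB \<and> (adj_spectral_radius n E = BB \<longleftrightarrow> Tight)"
    by (rule main_spec[OF fin ne])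
  have BBeq: "B = BB" unfolding B_def m_def N_def BB_def rr_def SS_def NN_def ..
  have TC: "Tight \<longleftrightarrow> C1 \<or> (\<exists>t. 1 \<le> t \<and> t \<le> i \<and> (C2a t \<or> C2b))"
  proof
    assume Tight thus "C1 \<or> (\<exists>t. 1 \<le> t \<and> t \<le> i \<and> (C2a t \<or> C2b))" by (rule Tight_Cond)
  next
    assume "C1 \<or> (\<exists>t. 1 \<le> t \<and> t \<le> i \<and> (C2a t \<or> C2b))"
    thus Tight
    proof
      assume C1 thus Tight by (rule C1_Tight)
    next
      assume "\<exists>t. 1 \<le> t \<and> t \<le> i \<and> (C2a t \<or> C2b)"
      then obtain t where t: "1 \<le> t" "t \<le> i" "C2a t \<or> C2b" by blast
      show Tight using t(3)
      proof
        assume "C2a t" thus Tight using C2a_Tight t by blast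
      next
        assume C2b thus Tight using C2b_Tight t by simp
      qed
    qed
  qed
  have CC: "((\<forall>k<n. m k = m 0) \<or>
      (\<exists>t. 1 \<le> t \<and> t \<le> i \<and>
         ((\<alpha> = 0 \<and> bidegreed n E \<and> (\<forall>k<t. deg n E k = n - 1) \<and> deg n E t < n - 1 \<and>
             (\<forall>k. t \<le> k \<and> k < n \<longrightarrow> deg n E k = deg n E t)) \<or>
          (\<alpha> > 0 \<and> bidegreed n E \<and> m 0 > m 1 \<and> (\<forall>k. 1 \<le> k \<and> k < n \<longrightarrow> m k = m 1) \<and>
             deg n E 0 = n - 1 \<and> deg n E 0 > deg n E 1 \<and>
             (\<forall>k. 1 \<le> k \<and> k < n \<longrightarrow> deg n E k = deg n E 1))))) \<longleftrightarrow>
     C1 \<or> (\<exists>t. 1 \<le> t \<and> t \<le> i \<and> (C2a t \<or> C2b))"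
    unfolding m_def C1_def C2a_def C2b_def ..
  show ?thesis using ms BBeq TC CC by simp
qed

end
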